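(* Let $A\in\mathbb{R}^{n\times n}$ be entrywise nonnegative with all diagonal entries positive (no invertibility assumed). Then $A$ is a Karamardian matrix.
   Context: For $M\in\mathbb{R}^{n\times n}$ let $K_M=\mathbb{R}^n_+\cap R(M)$ and $K_M^*=\{y: x^Ty\ge 0\ \forall x\in K_M\}$ (one has $K_M^*=\mathbb{R}^n_++N(M^T)$, with interior $\{a+b: a>0,\ b\in N(M^T)\}$). For $q$, LCP$(M,K_M,q)$ is to find $x\in K_M$ with $Mx+q\in K_M^*$ and $x^T(Mx+q)=0$. $M$ is a Karamardian matrix if $K_M\ne\{0\}$ and there exists $d$ in the interior of $K_M^*$ such that both LCP$(M,K_M,0)$ and LCP$(M,K_M,d)$ have $x=0$ as their only solution. *)

theory Defs
  imports "HOL-Analysis.Analysis"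
begin

definition nonneg_orthant :: "(real^'n) set" where
  "nonneg_orthant = {x. \<forall>i. x $ i \<ge> 0}"

definition K_cone :: "real^'n^'n \<Rightarrow> (real^'n) set" where
  "K_cone M = nonneg_orthant \<inter> range (\<lambda>x. M *v x)"

definition dual_cone :: "(real^'n) set \<Rightarrow> (real^'n) set" where
  "dual_cone K = {y. \<forall>x\<in>K. x \<bullet> y \<ge> 0}"

definition LCP_sol :: "real^'n^'n \<Rightarrow> (real^'n) set \<Rightarrow> real^'n \<Rightarrow> real^'n \<Rightarrow> bool" where
  "LCP_sol M K q x \<longleftrightarrow> x \<in> K \<and> M *v x + q \<in> dual_cone K \<and> x \<bullet> (M *v x + q) = 0"

definition karamardian :: "real^'n^'n \<Rightarrow> bool" where
  "karamardian M \<longleftrightarrow> K_cone M \<noteq> {0} \<and>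
     (\<exists>d\<in>interior (dual_cone (K_cone M)).
        {x. LCP_sol M (K_cone M) 0 x} = {0} \<and> {x. LCP_sol M (K_cone M) d x} = {0})"

end

theory Submission
  imports Defs
begin

lemma inner_zero_terms:
  fixes x y :: "real^'n"
  assumes "\<forall>i. x$i \<ge> 0" "\<forall>i. y$i \<ge> 0" "x \<bullet> y = 0"
  shows "x$i * y$i = 0"
proof -
  have "(\<Sum>i\<in>UNIV. x$i * y$i) = 0" using assms(3) by (simp add: inner_vec_def)
  moreover have "\<forall>i\<in>UNIV. 0 \<le> x$i * y$i" using assms by simp
  ultimately show ?thesis using sum_nonneg_eq_0_iff[of UNIV "\<lambda>i. x$i * y$i"] by simp
qed

lemma Av_nonneg:
  fixes A :: "real^'n^'n"
  assumes "\<forall>i j. A $ i $ j \<ge> 0" "\<forall>i. x$i \<ge> 0"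
  shows "(A *v x) $ i \<ge> A$i$i * x$i"
proof -
  have "(A *v x) $ i = (\<Sum>j\<in>UNIV. A$i$j * x$j)" by (simp add: matrix_vector_mult_def)
  also have "\<dots> \<ge> A$i$i * x$i"
    by (rule member_le_sum) (use assms in auto)
  finally show ?thesis .
qed

theorem mainTheorem16:
  fixes A :: "real^'n^'n"
  assumes "\<forall>i j. A $ i $ j \<ge> 0"
    and "\<forall>i. A $ i $ i > 0"
  shows "karamardian A"
proof -
  define one :: "real^'n" where "one = (\<chi> i. 1)"
  have Apos: "(A *v x) $ i \<ge> 0" if "\<forall>i. x$i \<ge> 0" for x i
    using Av_nonneg[OF assms(1) that, of i] assms(2) that
    by (smt (verit) mult_nonneg_nonneg)
  have sub: "nonneg_orthant \<subseteq> dual_cone (K_cone A)"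
  proof
    fix y :: "real^'n" assume y: "y \<in> nonneg_orthant"
    show "y \<in> dual_cone (K_cone A)"
      unfolding dual_cone_def
    proof (intro CollectI ballI)
      fix x assume "x \<in> K_cone A"
      then have "\<forall>i. x$i \<ge> 0" by (simp add: K_cone_def nonneg_orthant_def)
      then show "0 \<le> x \<bullet> y" using y
        by (simp add: inner_vec_def nonneg_orthant_def sum_nonneg)
    qed
  qed
  have K0: "K_cone A \<noteq> {0}"
  proof
    assume h: "K_cone A = {0}"
    have "A *v one \<in> K_cone A"
      using Apos[of one] by (auto simp: K_cone_def nonneg_orthant_def one_def)
    then have "A *v one = 0" using h by auto
    moreover obtain i :: 'n where True by simp
    have "(A *v one) $ i \<ge> A$i$i * one$i"
      using Av_nonneg[OF assms(1), of one i] by (simp add: one_def)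
    ultimately show False using assms(2)[rule_format, of i] by (simp add: one_def)
  qed
  have ball: "ball one (1/2) \<subseteq> nonneg_orthant"
  proof
    fix z assume "z \<in> ball one (1/2)"
    then have "norm (one - z) < 1/2" by (simp add: dist_norm)
    then have "\<bar>(one - z) $ i\<bar> < 1/2" for i
      using component_le_norm_cart[of "one - z" i] by linarith
    then have "\<bar>1 - z $ i\<bar> < 1/2" for i by (simp add: one_def)
    have "z $ i \<ge> 0" for i using \<open>\<And>i. \<bar>1 - z $ i\<bar> < 1/2\<close>[of i] unfolding abs_less_iff by linarith
    then show "z \<in> nonneg_orthant" by (simp add: nonneg_orthant_def)
  qed
  have dint: "one \<in> interior (dual_cone (K_cone A))"
    using ball sub by (meson centre_in_ball half_gt_zero_iff interior_maximal
        open_ball subset_trans zero_less_one interiorI)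
  have zero_in: "0 \<in> K_cone A" by (auto simp: K_cone_def nonneg_orthant_def intro: range_eqI[of _ _ 0])
  have S1: "{x. LCP_sol A (K_cone A) 0 x} = {0}"
  proof (rule set_eqI, rule iffI)
    fix x assume "x \<in> {x. LCP_sol A (K_cone A) 0 x}"
    then have xk: "x \<in> K_cone A" and io: "x \<bullet> (A *v x) = 0" by (auto simp: LCP_sol_def)
    then have xn: "\<forall>i. x$i \<ge> 0" by (simp add: K_cone_def nonneg_orthant_def)
    have "x $ i = 0" for i
    proof -
      have t: "x$i * (A *v x)$i = 0" using inner_zero_terms[OF xn _ io] Apos[OF xn] by blast
      have "x$i * (A$i$i * x$i) \<le> x$i * (A *v x)$i"
        using Av_nonneg[OF assms(1) xn, of i] xn by (simp add: mult_left_mono)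
      then have "A$i$i * (x$i * x$i) \<le> 0" using t by (simp add: algebra_simps)
      then have "x$i * x$i \<le> 0" using assms(2)[rule_format, of i]
        by (simp add: mult_le_0_iff)
      then show ?thesis by (simp add: mult_le_0_iff) (smt (verit) xn)
    qed
    then show "x \<in> {0}" by (simp add: vec_eq_iff)
  next
    fix x :: "real^'n" assume "x \<in> {0}"
    then show "x \<in> {x. LCP_sol A (K_cone A) 0 x}"
      using zero_in sub by (auto simp: LCP_sol_def dual_cone_def)
  qed
  have S2: "{x. LCP_sol A (K_cone A) one x} = {0}"
  proof (rule set_eqI, rule iffI)
    fix x assume "x \<in> {x. LCP_sol A (K_cone A) one x}"
    then have xk: "x \<in> K_cone A" and io: "x \<bullet> (A *v x + one) = 0" by (auto simp: LCP_sol_def)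
    then have xn: "\<forall>i. x$i \<ge> 0" by (simp add: K_cone_def nonneg_orthant_def)
    have pos: "\<forall>i. (A *v x + one)$i \<ge> 0" using Apos[OF xn] by (simp add: one_def)
    have "x $ i = 0" for i
    proof -
      have t: "x$i * (A *v x + one)$i = 0" using inner_zero_terms[OF xn pos io] .
      have "(A *v x + one)$i > 0" using Apos[OF xn, of i] by (simp add: one_def)
      then show ?thesis using t by simp
    qed
    then show "x \<in> {0}" by (simp add: vec_eq_iff)
  next
    fix x :: "real^'n" assume "x \<in> {0}"
    moreover have "one \<in> dual_cone (K_cone A)" using sub by (auto simp: nonneg_orthant_def one_def)
    ultimately show "x \<in> {x. LCP_sol A (K_cone A) one x}"
      using zero_in by (auto simp: LCP_sol_def)
  qed
  show ?thesis unfolding karamardian_def using K0 dint S1 S2 by blast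
qed

end
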